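(* Let $s\ge1$, $m_1,n_1>0$, $0<N<1$, $1<n_2<m_2$, and let $n(x)=n_1(x+n_2)^N$, $m(x)=m_1(x+m_2)^M$, $a^*(x)=\dfrac{-1+\sqrt{1+4(x+1)^s}}{2(x+1)^s}$. If $M>N+s$ and $$m_2>\Big\{\frac{n_1}{2m_1}(1+\sqrt5)\Big\}^{1/(M-N-s)},$$ then $a^*(x)>\dfrac{n(x)}{m(x)}$ for all $x\ge0$. *)

theory Defs
  imports "HOL-Analysis.Analysis"
begin

end

theory Submission
  imports Defs
begin

theorem lemma4p2:
  fixes s m1 n1 N M n2 m2 :: real
  assumes "s \<ge> 1" and "m1 > 0" and "n1 > 0" and "0 < N" and "N < 1"
    and "1 < n2" and "n2 < m2"
    and "M > N + s"
    and "m2 > ((n1 / (2 * m1)) * (1 + sqrt 5)) powr (1 / (M - N - s))"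
  shows "\<forall>x::real. x \<ge> 0 \<longrightarrow>
     (-1 + sqrt (1 + 4 * (x + 1) powr s)) / (2 * (x + 1) powr s)
       > (n1 * (x + n2) powr N) / (m1 * (x + m2) powr M)"
proof (intro allI impI)
  fix x :: real assume x: "x \<ge> 0"
  define e where "e = M - N - s"
  define C where "C = (n1 / (2 * m1)) * (1 + sqrt 5)"
  define y where "y = (x + 1) powr s"
  define b where "b = x + m2"
  have e: "e > 0" using assms unfolding e_def by simp
  have C: "C > 0" using assms unfolding C_def by (simp add: add_pos_nonneg)
  have b1: "b > x + 1" "b \<ge> m2" using assms x unfolding b_def by auto
  have bpos: "b > 0" using b1 x by simp
  have y1: "y \<ge> 1" unfolding y_def using x assms(1) by (simp add: ge_one_powr_ge_zero)
  have s1: "sqrt (1 + 4*y) \<le> sqrt 5 * y"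
  proof -
    have yy: "y \<le> y*y" using mult_left_mono[of 1 y y] y1 by simp
    have "1 + 4*y \<le> 5 * y^2" using y1 yy unfolding power2_eq_square by linarith
    hence "sqrt (1 + 4*y) \<le> sqrt (5 * y^2)" by (rule real_sqrt_le_mono)
    also have "\<dots> = sqrt 5 * y" using y1 by (simp add: real_sqrt_mult)
    finally show ?thesis .
  qed
  have sq: "(sqrt (1 + 4*y))^2 = 1 + 4*y" using y1 by simp
  have A: "(-1 + sqrt (1 + 4 * y)) / (2 * y) = 2 / (1 + sqrt (1 + 4*y))"
  proof -
    define r where "r = sqrt (1 + 4*y)"
    have r0: "r \<ge> 0" unfolding r_def using y1 by simp
    have rr: "r * r = 1 + 4*y" using sq unfolding r_def power2_eq_square .
    have "(-1 + r) * (1 + r) = 2 * (2 * y)" using rr by (simp add: algebra_simps)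
    hence "(-1 + r) / (2 * y) = 2 / (1 + r)" using y1 r0 by (simp add: frac_eq_eq)
    thus ?thesis unfolding r_def .
  qed
  have A2: "2 / ((1 + sqrt 5) * y) \<le> 2 / (1 + sqrt (1 + 4*y))"
  proof (rule divide_left_mono)
    show "1 + sqrt (1 + 4*y) \<le> (1 + sqrt 5) * y" using s1 y1 by (simp add: algebra_simps)
    show "0 < (1 + sqrt 5) * y * (1 + sqrt (1 + 4 * y))" using y1 by (simp add: add_pos_nonneg)
  qed simp
  have Cm: "m2 powr e > C"
  proof -
    have "(C powr (1/e)) powr e < m2 powr e"
      using assms(9) e C unfolding C_def[symmetric] e_def[symmetric] by (intro powr_less_mono2) auto
    thus ?thesis using e C by (simp add: powr_powr)
  qed
  have be: "b powr e \<ge> m2 powr e" using b1 e assms by (intro powr_mono2) auto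
  have bs: "b powr s \<ge> y" unfolding y_def using b1 x assms by (intro powr_mono2) auto
  have ys: "y > 0" using y1 by simp
  have bMN: "b powr (M - N) > C * y"
  proof -
    have "b powr (M - N) = b powr e * b powr s" unfolding e_def by (simp add: powr_add[symmetric])
    moreover have "b powr e * b powr s > C * y"
    proof -
      have "C * y < m2 powr e * y" using Cm ys by simp
      also have "\<dots> \<le> b powr e * y" using be ys by (simp add: mult_right_mono)
      also have "\<dots> \<le> b powr e * b powr s" using bs by (simp add: mult_left_mono)
      finally show ?thesis .
    qed
    ultimately show ?thesis by simp
  qed
  have nb: "(x + n2) powr N < b powr N" using assms x b_def by (intro powr_less_mono2) auto
  have "(n1 * (x + n2) powr N) / (m1 * (x + m2) powr M) < (n1 * b powr N) / (m1 * b powr M)"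
  proof -
    have d: "m1 * b powr M > 0" using assms(2) bpos by simp
    have "n1 * (x + n2) powr N < n1 * b powr N" using nb assms(3) by simp
    thus ?thesis using d unfolding b_def[symmetric] by (rule divide_strict_right_mono)
  qed
  also have "\<dots> = (n1/m1) / b powr (M - N)"
  proof -
    have "b powr (M - N) = b powr M / b powr N" by (rule powr_diff)
    moreover have "b powr N > 0" "b powr M > 0" "m1 > 0" using bpos assms(2) by auto
    ultimately show ?thesis by (simp add: field_simps)
  qed
  also have "\<dots> < (n1/m1) / (C * y)" 
  proof -
    have cy: "C * y > 0" using C ys by simp
    have np: "n1/m1 > 0" using assms(2,3) by simp
    have bp: "b powr (M - N) > 0" using bpos by simp
    show ?thesis by (rule divide_strict_left_mono[OF bMN np mult_pos_pos[OF bp cy]])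
  qed
  also have "\<dots> = 2 / ((1 + sqrt 5) * y)" 
  proof -
    define K where "K = (1 + sqrt 5) * y"
    have K: "K > 0" unfolding K_def using ys by (simp add: add_pos_nonneg)
    have "C * y = (n1/(2*m1)) * K" unfolding C_def K_def by simp
    moreover have "n1/m1 / ((n1/(2*m1)) * K) = 2 / K" using K assms(2,3) by (simp add: field_simps)
    ultimately show ?thesis unfolding K_def by simp
  qed
  also have "\<dots> \<le> (-1 + sqrt (1 + 4 * y)) / (2 * y)" using A A2 by simp
  finally show "(-1 + sqrt (1 + 4 * (x + 1) powr s)) / (2 * (x + 1) powr s)
       > (n1 * (x + n2) powr N) / (m1 * (x + m2) powr M)" unfolding y_def .
qed

end
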